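(* Let $A\in SL_2\mathcal{V}$. (1) If $A\in\mathcal{P}$ and $A\kappa=\kappa x$ for some $\kappa\in S\mathbb{H}$ and $x\in\mathbb{H}$, then $x=1$. (2) $A\in\mathcal{P}$ if and only if $A$ is not the identity and there exists $\kappa\in S\mathbb{H}$ with $A\kappa=\kappa$.
   Context: For $q=a+bi+cj+dk\in\mathbb{H}$, $q^*=a+bi+cj-dk$, $\bar q=a-bi-cj-dk$. $\mathcal{V}=\mathrm{span}_\mathbb{R}\{1,i,j\}$. $S\mathbb{H}=\{(\xi,\eta)\in\mathbb{H}^2\setminus\{(0,0)\}:\xi\bar\eta\in\mathcal{V}\}$, with right multiplication $(\xi,\eta)x=(\xi x,\eta x)$; matrices act on columns by multiplication. $SL_2\mathcal{V}$ is the group of quaternionic matrices $\begin{pmatrix}a&b\\c&d\end{pmatrix}$ with $ab^*,cd^*,c^*a,d^*b,ba^*,dc^*,a^*c,b^*d\in\mathcal{V}$ and $ad^*-bc^*=da^*-cb^*=d^*a-b^*c=a^*d-c^*b=1$. $\mathcal{P}$ is the set of parabolic translations: $A\in SL_2\mathcal{V}$ with $A\neq1$ and $(A-1)^2=0$ (equivalently, $A$ conjugate in $SL_2\mathcal{V}$ to $\begin{pmatrix}1&1\\0&1\end{pmatrix}$). *)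

theory Defs
  imports Main "HOL.Real"
begin

datatype quat = Quat (Re: real) (Im1: real) (Im2: real) (Im3: real)

definition qzero :: quat where "qzero = Quat 0 0 0 0"
definition qone :: quat where "qone = Quat 1 0 0 0"

definition qadd :: "quat \<Rightarrow> quat \<Rightarrow> quat" where
  "qadd p q = Quat (Re p + Re q) (Im1 p + Im1 q) (Im2 p + Im2 q) (Im3 p + Im3 q)"

definition qsub :: "quat \<Rightarrow> quat \<Rightarrow> quat" where
  "qsub p q = Quat (Re p - Re q) (Im1 p - Im1 q) (Im2 p - Im2 q) (Im3 p - Im3 q)"

text \<open>Hamilton product, with i^2 = j^2 = k^2 = ijk = -1.\<close>
definition qmul :: "quat \<Rightarrow> quat \<Rightarrow> quat" where
  "qmul p q = Quat
     (Re p * Re q - Im1 p * Im1 q - Im2 p * Im2 q - Im3 p * Im3 q)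
     (Re p * Im1 q + Im1 p * Re q + Im2 p * Im3 q - Im3 p * Im2 q)
     (Re p * Im2 q - Im1 p * Im3 q + Im2 p * Re q + Im3 p * Im1 q)
     (Re p * Im3 q + Im1 p * Im2 q - Im2 p * Im1 q + Im3 p * Re q)"

definition qcnj :: "quat \<Rightarrow> quat" where
  "qcnj q = Quat (Re q) (- Im1 q) (- Im2 q) (- Im3 q)"

definition qstar :: "quat \<Rightarrow> quat" where
  "qstar q = Quat (Re q) (Im1 q) (Im2 q) (- Im3 q)"

text \<open>V = span_R {1, i, j}.\<close>
definition inV :: "quat \<Rightarrow> bool" where
  "inV q \<longleftrightarrow> Im3 q = 0"

text \<open>A matrix (a b; c d) is represented as the tuple (a, b, c, d).\<close>
type_synonym qmat = "quat \<times> quat \<times> quat \<times> quat"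

definition mat_one :: qmat where "mat_one = (qone, qzero, qzero, qone)"

definition mat_mul :: "qmat \<Rightarrow> qmat \<Rightarrow> qmat" where
  "mat_mul M N = (case M of (a, b, c, d) \<Rightarrow> case N of (a', b', c', d') \<Rightarrow>
     (qadd (qmul a a') (qmul b c'), qadd (qmul a b') (qmul b d'),
      qadd (qmul c a') (qmul d c'), qadd (qmul c b') (qmul d d')))"

definition mat_sub :: "qmat \<Rightarrow> qmat \<Rightarrow> qmat" where
  "mat_sub M N = (case M of (a, b, c, d) \<Rightarrow> case N of (a', b', c', d') \<Rightarrow>
     (qsub a a', qsub b b', qsub c c', qsub d d'))"

definition mat_zero :: qmat where "mat_zero = (qzero, qzero, qzero, qzero)"

definition mat_act :: "qmat \<Rightarrow> quat \<times> quat \<Rightarrow> quat \<times> quat" where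
  "mat_act M v = (case M of (a, b, c, d) \<Rightarrow> case v of (\<xi>, \<eta>) \<Rightarrow>
     (qadd (qmul a \<xi>) (qmul b \<eta>), qadd (qmul c \<xi>) (qmul d \<eta>)))"

definition vec_rmul :: "quat \<times> quat \<Rightarrow> quat \<Rightarrow> quat \<times> quat" where
  "vec_rmul v x = (case v of (\<xi>, \<eta>) \<Rightarrow> (qmul \<xi> x, qmul \<eta> x))"

definition SL2V :: "qmat set" where
  "SL2V = {(a, b, c, d).
     inV (qmul a (qstar b)) \<and> inV (qmul c (qstar d)) \<and>
     inV (qmul (qstar c) a) \<and> inV (qmul (qstar d) b) \<and>
     inV (qmul b (qstar a)) \<and> inV (qmul d (qstar c)) \<and>
     inV (qmul (qstar a) c) \<and> inV (qmul (qstar b) d) \<and>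
     qsub (qmul a (qstar d)) (qmul b (qstar c)) = qone \<and>
     qsub (qmul d (qstar a)) (qmul c (qstar b)) = qone \<and>
     qsub (qmul (qstar d) a) (qmul (qstar b) c) = qone \<and>
     qsub (qmul (qstar a) d) (qmul (qstar c) b) = qone}"

definition SH :: "(quat \<times> quat) set" where
  "SH = {(\<xi>, \<eta>). (\<xi>, \<eta>) \<noteq> (qzero, qzero) \<and> inV (qmul \<xi> (qcnj \<eta>))}"

definition Par :: "qmat set" where
  "Par = {A \<in> SL2V. A \<noteq> mat_one \<and>
     mat_mul (mat_sub A mat_one) (mat_sub A mat_one) = mat_zero}"

end

theory Submission
  imports Defs
begin

lemma quat_eqI: "Re p = Re q \<Longrightarrow> Im1 p = Im1 q \<Longrightarrow> Im2 p = Im2 q \<Longrightarrow> Im3 p = Im3 q \<Longrightarrow> p = q"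
  by (cases p; cases q) auto

definition qnsq :: "quat \<Rightarrow> real" where
  "qnsq q = Re q ^ 2 + Im1 q ^ 2 + Im2 q ^ 2 + Im3 q ^ 2"

lemma qnsq_pos: "q \<noteq> Quat 0 0 0 0 \<Longrightarrow> qnsq q \<noteq> 0"
proof -
  assume "q \<noteq> Quat 0 0 0 0"
  then have "Re q \<noteq> 0 \<or> Im1 q \<noteq> 0 \<or> Im2 q \<noteq> 0 \<or> Im3 q \<noteq> 0"
    by (cases q) auto
  moreover have "Re q ^ 2 \<ge> 0" "Im1 q ^ 2 \<ge> 0" "Im2 q ^ 2 \<ge> 0" "Im3 q ^ 2 \<ge> 0" by simp_all
  ultimately have "qnsq q > 0" unfolding qnsq_def
    by (smt (verit) power2_less_eq_zero_iff)
  then show ?thesis by simp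
qed

instantiation quat :: ring_1
begin
definition "0 = qzero"
definition "1 = qone"
definition "p + q = qadd p q"
definition "p - q = qsub p q"
definition "- q = Quat (- Re q) (- Im1 q) (- Im2 q) (- Im3 q)"
definition "p * q = qmul p q"

instance
proof
  fix a b c :: quat
  show "a * b * c = a * (b * c)"
    by (rule quat_eqI) (simp_all add: times_quat_def qmul_def algebra_simps)
  show "(a + b) * c = a * c + b * c"
    by (rule quat_eqI) (simp_all add: times_quat_def plus_quat_def qmul_def qadd_def algebra_simps)
  show "a * (b + c) = a * b + a * c"
    by (rule quat_eqI) (simp_all add: times_quat_def plus_quat_def qmul_def qadd_def algebra_simps)
  show "a + b + c = a + (b + c)"
    by (rule quat_eqI) (simp_all add: plus_quat_def qadd_def algebra_simps)
  show "a + b = b + a"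
    by (rule quat_eqI) (simp_all add: plus_quat_def qadd_def algebra_simps)
  show "0 + a = a"
    by (rule quat_eqI) (simp_all add: plus_quat_def qadd_def zero_quat_def qzero_def)
  show "- a + a = 0"
    by (rule quat_eqI) (simp_all add: plus_quat_def qadd_def zero_quat_def qzero_def uminus_quat_def)
  show "a - b = a + - b"
    by (rule quat_eqI) (simp_all add: plus_quat_def qadd_def minus_quat_def qsub_def uminus_quat_def)
  show "(0::quat) \<noteq> 1"
    by (simp add: zero_quat_def one_quat_def qzero_def qone_def)
  show "1 * a = a"
    by (rule quat_eqI) (simp_all add: times_quat_def qmul_def one_quat_def qone_def)
  show "a * 1 = a"
    by (rule quat_eqI) (simp_all add: times_quat_def qmul_def one_quat_def qone_def)
qed
end

instantiation quat :: inverse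
begin
definition "inverse q = Quat (Re q / qnsq q) (- Im1 q / qnsq q) (- Im2 q / qnsq q) (- Im3 q / qnsq q)"
definition "divide p q = p * inverse (q::quat)"
instance ..
end

instance quat :: division_ring
proof
  fix a b :: quat
  show "a / b = a * inverse b" by (simp add: divide_quat_def)
  show "inverse (0::quat) = 0"
    by (simp add: inverse_quat_def zero_quat_def qzero_def qnsq_def)
  assume "a \<noteq> 0"
  then have n: "qnsq a \<noteq> 0" using qnsq_pos by (simp add: zero_quat_def qzero_def)
  show "inverse a * a = 1"
    by (rule quat_eqI) (use n in \<open>simp_all add: times_quat_def qmul_def one_quat_def qone_def inverse_quat_def field_simps, simp_all add: qnsq_def power2_eq_square algebra_simps\<close>)
  show "a * inverse a = 1"
    by (rule quat_eqI) (use n in \<open>simp_all add: times_quat_def qmul_def one_quat_def qone_def inverse_quat_def field_simps, simp_all add: qnsq_def power2_eq_square algebra_simps\<close>)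
qed


lemma qops: "qmul p q = p * q" "qadd p q = p + q" "qsub p q = p - q" "qzero = 0" "qone = 1"
  by (simp_all add: times_quat_def plus_quat_def minus_quat_def zero_quat_def one_quat_def)

lemma part1:
  fixes a b c d p q x :: quat
  assumes n1: "(a-1)*(a-1) + b*c = 0" and n2: "(a-1)*b + b*(d-1) = 0"
    and n3: "c*(a-1) + (d-1)*c = 0" and n4: "c*b + (d-1)*(d-1) = 0"
    and e1: "a*p + b*q = p*x" and e2: "c*p + d*q = q*x" and nz: "(p,q) \<noteq> (0,0)"
  shows "x = 1"
proof -
  define y where "y = x - 1"
  have f1: "(a-1)*p + b*q = p*y" using e1 by (simp add: y_def algebra_simps)
  have f2: "c*p + (d-1)*q = q*y" using e2 by (simp add: y_def algebra_simps)
  have "p*(y*y) = (p*y)*y" by (simp add: mult.assoc)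
  also have "\<dots> = (a-1)*(p*y) + b*(q*y)" by (simp add: f1[symmetric] algebra_simps)
  also have "\<dots> = ((a-1)*(a-1) + b*c)*p + ((a-1)*b + b*(d-1))*q"
    by (simp add: f1[symmetric] f2[symmetric] algebra_simps)
  finally have g1: "p*(y*y) = 0" using n1 n2 by simp
  have "q*(y*y) = (q*y)*y" by (simp add: mult.assoc)
  also have "\<dots> = c*(p*y) + (d-1)*(q*y)" by (simp add: f2[symmetric] algebra_simps)
  also have "\<dots> = (c*(a-1) + (d-1)*c)*p + (c*b + (d-1)*(d-1))*q"
    by (simp add: f1[symmetric] f2[symmetric] algebra_simps)
  finally have g2: "q*(y*y) = 0" using n3 n4 by simp
  have "y*y = 0" using g1 g2 nz by auto
  then have "y = 0" by simp
  then show ?thesis by (simp add: y_def)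
qed


lemma star_mul: "qstar (p * q) = qstar q * qstar p"
  by (rule quat_eqI) (simp_all add: qstar_def times_quat_def qmul_def algebra_simps)
lemma star_add: "qstar (p + q) = qstar p + qstar q"
  by (rule quat_eqI) (simp_all add: qstar_def plus_quat_def qadd_def)
lemma star_sub: "qstar (p - q) = qstar p - qstar q"
  by (rule quat_eqI) (simp_all add: qstar_def minus_quat_def qsub_def)
lemma star_one: "qstar 1 = 1"
  by (rule quat_eqI) (simp_all add: qstar_def one_quat_def qone_def)
lemma star_star: "qstar (qstar p) = p"
  by (rule quat_eqI) (simp_all add: qstar_def)
lemma inV_star: "inV p \<longleftrightarrow> qstar p = p"
  by (cases p) (auto simp: inV_def qstar_def)

lemma Im3_inv: "Im3 (p * inverse q) = Im3 (p * qcnj q) / qnsq q"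
  by (simp add: times_quat_def qmul_def inverse_quat_def qcnj_def add_divide_distrib diff_divide_distrib)

lemma bwd:
  fixes a b c d p q :: quat
  assumes det: "qstar d * a - qstar b * c = 1" and v: "inV (qstar a * c)"
    and e1: "a*p + b*q = p" and e2: "c*p + d*q = q" and nz: "(p,q) \<noteq> (0,0)"
    and sh: "inV (p * qcnj q)"
  shows "(a-1)*(a-1) + b*c = 0 \<and> (a-1)*b + b*(d-1) = 0 \<and>
         c*(a-1) + (d-1)*c = 0 \<and> c*b + (d-1)*(d-1) = 0"
proof (cases "q = 0")
  case True
  then have pn: "p \<noteq> 0" using nz by simp
  have "(a-1)*p = 0" using e1 True by (simp add: algebra_simps)
  then have a1: "a = 1" using pn by simp
  have "c*p = 0" using e2 True by simp
  then have c0: "c = 0" using pn by simp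
  have "qstar d = 1" using det a1 c0 by simp
  then have "d = 1" using star_star[of d] star_one by simp
  then show ?thesis using a1 c0 by simp
next
  case False
  define z where "z = p * inverse q"
  have zV: "qstar z = z"
    using sh Im3_inv[of p q] unfolding z_def inV_star[symmetric] by (simp add: inV_def)
  have "(a*p + b*q) * inverse q = z" using e1 by (simp add: z_def)
  then have ez1: "a*z + b = z" using False by (simp add: z_def algebra_simps mult.assoc)
  have "(c*p + d*q) * inverse q = 1" using e2 False by simp
  then have ez2: "c*z + d = 1" using False by (simp add: z_def algebra_simps mult.assoc)
  have bz: "b = z - a*z" using ez1 by (simp add: algebra_simps)
  have dz: "d = 1 - c*z" using ez2 by (simp add: algebra_simps)
  have sv: "qstar c * a = qstar a * c"
    using v unfolding inV_star by (simp add: star_mul star_star)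
  have sd: "qstar d = 1 - z * qstar c" using dz zV by (simp add: star_sub star_mul star_one)
  have sb: "qstar b = z - z * qstar a" using bz zV by (simp add: star_sub star_mul)
  have "1 = (1 - z * qstar c)*a - (z - z*qstar a)*c" using det sd sb by simp
  also have "\<dots> = a - z*(qstar c * a) - z*c + z*(qstar a*c)" by (simp add: algebra_simps mult.assoc)
  also have "\<dots> = a - z*c" using sv by simp
  finally have az: "a = 1 + z*c" by (simp add: algebra_simps)
  have bz2: "b = - (z*c*z)" using bz az by (simp add: algebra_simps)
  show ?thesis unfolding az bz2 dz by (simp add: algebra_simps)
qed


lemma finv:
  "Im3 ((a*x + b*y) * qcnj (c*x + d*y)) = Im3 (x * qcnj y) - qnsq x * Im3 (qstar a * c)
     - qnsq y * Im3 (qstar b * d) - Re (Quat 0 0 0 1 * (qstar d * a - qstar b * c - 1) * (x * qcnj y))"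
  by (simp add: times_quat_def plus_quat_def minus_quat_def one_quat_def qmul_def qadd_def qsub_def
      qcnj_def qstar_def qnsq_def qone_def power2_eq_square algebra_simps)

lemma quad:
  "Im3 ((p+q+q) * qcnj (r+s+s)) - 2 * Im3 ((p+q) * qcnj (r+s)) + Im3 (p * qcnj r) = 2 * Im3 (q * qcnj s)"
  by (simp add: times_quat_def plus_quat_def qmul_def qadd_def qcnj_def algebra_simps)


lemma fwd_key:
  fixes a b c d x y :: quat
  assumes det: "qstar d * a - qstar b * c = 1" and v1: "inV (qstar a * c)" and v2: "inV (qstar b * d)"
    and n1: "(a-1)*(a-1) + b*c = 0" and n2: "(a-1)*b + b*(d-1) = 0"
    and n3: "c*(a-1) + (d-1)*c = 0" and n4: "c*b + (d-1)*(d-1) = 0"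
  defines "w1 \<equiv> (a-1)*x + b*y" and "w2 \<equiv> c*x + (d-1)*y"
  shows "inV (w1 * qcnj w2) \<and> a*w1 + b*w2 = w1 \<and> c*w1 + d*w2 = w2"
proof -
  have F: "Im3 ((a*u + b*v) * qcnj (c*u + d*v)) = Im3 (u * qcnj v)" for u v
    using finv[of a u b v c d] det v1 v2 by (simp add: inV_def, simp add: zero_quat_def qzero_def)
  have A1: "a*w1 + b*w2 = w1"
  proof -
    have "a*w1 + b*w2 - w1 = (a-1)*w1 + b*w2" by (simp add: algebra_simps)
    also have "\<dots> = ((a-1)*(a-1) + b*c)*x + ((a-1)*b + b*(d-1))*y"
      unfolding w1_def w2_def by (simp add: algebra_simps)
    finally show ?thesis using n1 n2 by simp
  qed
  have A2: "c*w1 + d*w2 = w2"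
  proof -
    have "c*w1 + d*w2 - w2 = c*w1 + (d-1)*w2" by (simp add: algebra_simps)
    also have "\<dots> = (c*(a-1) + (d-1)*c)*x + (c*b + (d-1)*(d-1))*y"
      unfolding w1_def w2_def by (simp add: algebra_simps)
    finally show ?thesis using n3 n4 by simp
  qed
  have B1: "a*x + b*y = x + w1" "c*x + d*y = y + w2"
    unfolding w1_def w2_def by (simp_all add: algebra_simps)
  have B2: "a*(x+w1) + b*(y+w2) = x + w1 + w1" "c*(x+w1) + d*(y+w2) = y + w2 + w2"
    using B1 A1 A2 by (simp_all add: algebra_simps)
  have "Im3 ((x+w1) * qcnj (y+w2)) = Im3 (x * qcnj y)" using F[of x y] B1 by simp
  moreover have "Im3 ((x+w1+w1) * qcnj (y+w2+w2)) = Im3 ((x+w1) * qcnj (y+w2))"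
    using F[of "x+w1" "y+w2"] B2 by simp
  ultimately have "Im3 (w1 * qcnj w2) = 0" using quad[of x w1 y w2] by simp
  then show ?thesis using A1 A2 by (simp add: inV_def)
qed

lemma fwd:
  fixes a b c d :: quat
  assumes det: "qstar d * a - qstar b * c = 1" and v1: "inV (qstar a * c)" and v2: "inV (qstar b * d)"
    and n1: "(a-1)*(a-1) + b*c = 0" and n2: "(a-1)*b + b*(d-1) = 0"
    and n3: "c*(a-1) + (d-1)*c = 0" and n4: "c*b + (d-1)*(d-1) = 0"
    and ne: "(a,b,c,d) \<noteq> (1,0,0,1)"
  shows "\<exists>p q. (p,q) \<noteq> (0,0) \<and> inV (p * qcnj q) \<and> a*p + b*q = p \<and> c*p + d*q = q"
proof (cases "(a-1, c) = (0,0)")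
  case True
  note k = fwd_key[OF assms(1-7), of 0 1]
  have "(b, d-1) \<noteq> (0,0)" using True ne by auto
  then show ?thesis using k by (intro exI[of _ b] exI[of _ "d-1"]) simp
next
  case False
  note k = fwd_key[OF assms(1-7), of 1 0]
  then show ?thesis using False by (intro exI[of _ "a-1"] exI[of _ c]) simp
qed


theorem lemma3p26:
  assumes "A \<in> SL2V"
  shows "(A \<in> Par \<longrightarrow> (\<forall>\<kappa> \<in> SH. \<forall>x. mat_act A \<kappa> = vec_rmul \<kappa> x \<longrightarrow> x = qone))
       \<and> (A \<in> Par \<longleftrightarrow> (A \<noteq> mat_one \<and> (\<exists>\<kappa> \<in> SH. mat_act A \<kappa> = \<kappa>)))"
proof -
  obtain a b c d where A: "A = (a,b,c,d)" by (cases A) auto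
  have S: "qstar d * a - qstar b * c = 1" "inV (qstar a * c)" "inV (qstar b * d)"
    using assms unfolding A SL2V_def by (simp_all add: qops)
  have one: "mat_one = (1,0,0,1)" by (simp add: mat_one_def qops)
  have P: "A \<in> Par \<longleftrightarrow> A \<noteq> mat_one \<and> ((a-1)*(a-1) + b*c = 0 \<and> (a-1)*b + b*(d-1) = 0 \<and>
         c*(a-1) + (d-1)*c = 0 \<and> c*b + (d-1)*(d-1) = 0)"
    using assms unfolding Par_def A by (simp add: mat_mul_def mat_sub_def mat_one_def mat_zero_def qops)
  have act: "mat_act A (p,q) = (a*p+b*q, c*p+d*q)" for p q
    unfolding A by (simp add: mat_act_def qops)
  have rm: "vec_rmul (p,q) x = (p*x, q*x)" for p q x by (simp add: vec_rmul_def qops)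
  have SH: "(p,q) \<in> SH \<longleftrightarrow> (p,q) \<noteq> (0,0) \<and> inV (p * qcnj q)" for p q
    by (simp add: SH_def qops)
  have part1': "x = qone" if "A \<in> Par" "\<kappa> \<in> SH" "mat_act A \<kappa> = vec_rmul \<kappa> x" for \<kappa> x
  proof -
    obtain p q where k: "\<kappa> = (p,q)" by (cases \<kappa>) auto
    show ?thesis using part1[of a b c d p q x] that P SH[of p q] unfolding k act rm
      by (simp add: qops)
  qed
  have fw: "\<exists>\<kappa> \<in> SH. mat_act A \<kappa> = \<kappa>" if "A \<in> Par"
  proof -
    have ne: "(a,b,c,d) \<noteq> (1,0,0,1)" using that P one A by simp
    have N: "(a-1)*(a-1) + b*c = 0" "(a-1)*b + b*(d-1) = 0"
         "c*(a-1) + (d-1)*c = 0" "c*b + (d-1)*(d-1) = 0" using that P by simp_all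
    obtain p q where "(p,q) \<noteq> (0,0)" "inV (p * qcnj q)" "a*p + b*q = p" "c*p + d*q = q"
      using fwd[OF S N ne] by blast
    then show ?thesis by (intro bexI[of _ "(p,q)"]) (simp_all add: SH act)
  qed
  have bw: "A \<in> Par" if "A \<noteq> mat_one" "\<kappa> \<in> SH" "mat_act A \<kappa> = \<kappa>" for \<kappa>
  proof -
    obtain p q where k: "\<kappa> = (p,q)" by (cases \<kappa>) auto
    show ?thesis using bwd[of d a b c p q] S that P SH[of p q] unfolding k act by simp
  qed
  have ne1: "A \<noteq> mat_one" if "A \<in> Par" using that P by simp
  have c1: "A \<in> Par \<longrightarrow> (\<forall>\<kappa> \<in> SH. \<forall>x. mat_act A \<kappa> = vec_rmul \<kappa> x \<longrightarrow> x = qone)"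
    using part1' by blast
  have c2: "A \<in> Par \<longleftrightarrow> (A \<noteq> mat_one \<and> (\<exists>\<kappa> \<in> SH. mat_act A \<kappa> = \<kappa>))"
  proof
    assume "A \<in> Par" then show "A \<noteq> mat_one \<and> (\<exists>\<kappa> \<in> SH. mat_act A \<kappa> = \<kappa>)"
      using ne1 fw by simp
  next
    assume h: "A \<noteq> mat_one \<and> (\<exists>\<kappa> \<in> SH. mat_act A \<kappa> = \<kappa>)"
    then obtain \<kappa> where "\<kappa> \<in> SH" "mat_act A \<kappa> = \<kappa>" by blast
    then show "A \<in> Par" using bw h by blast
  qed
  show ?thesis using c1 c2 by (rule conjI)
qed

end
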